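(* Let $n>4$ and let $\phi:\mathrm{Aut}(F_n)\to\mathrm{Diff}^2_+(S^1)$ be a homomorphism. For $i\neq j$ put $a_{ij}=\phi(A_{ij})$ and $b_{ij}=\phi(B_{ij})$. Then each of the diffeomorphisms $a_{ij}$ and $b_{ij}$ has a fixed point.
   Context: $F_n$ is the free group with basis $e_1,\dots,e_n$. For $i\neq j$, $A_{ij}\in\mathrm{Aut}(F_n)$ is defined by $A_{ij}(e_i)=e_ie_j$ and $A_{ij}(e_k)=e_k$ for $k\neq i$, and $B_{ij}\in\mathrm{Aut}(F_n)$ by $B_{ij}(e_i)=e_je_i$ and $B_{ij}(e_k)=e_k$ for $k\neq i$. $\mathrm{Diff}^2_+(S^1)$ is the group of orientation-preserving $C^2$ diffeomorphisms of $S^1$. *)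

theory Defs
  imports "HOL-Analysis.Analysis" "HOL-Algebra.Bij"
begin

text \<open>A letter is a pair (i, b): (i, True) stands for e_i and (i, False) for e_i^{-1}.
  Elements of F_n are freely reduced words in the letters with 1 \<le> i \<le> n.\<close>

type_synonym letter = "nat \<times> bool"

definition inv_letter :: "letter \<Rightarrow> letter" where
  "inv_letter x = (fst x, \<not> snd x)"

definition inv_word :: "letter list \<Rightarrow> letter list" where
  "inv_word w = rev (map inv_letter w)"

definition reduced :: "letter list \<Rightarrow> bool" where
  "reduced w \<longleftrightarrow> (\<forall>k. Suc k < length w \<longrightarrow> w ! Suc k \<noteq> inv_letter (w ! k))"

definition push_letter :: "letter \<Rightarrow> letter list \<Rightarrow> letter list" where
  "push_letter x acc = (case acc of [] \<Rightarrow> [x]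
      | y # ys \<Rightarrow> (if y = inv_letter x then ys else x # acc))"

definition reduce :: "letter list \<Rightarrow> letter list" where
  "reduce w = foldr push_letter w []"

definition free_group :: "nat \<Rightarrow> letter list monoid" where
  "free_group n = \<lparr>carrier = {w. reduced w \<and> (\<forall>x\<in>set w. 1 \<le> fst x \<and> fst x \<le> n)},
                   mult = (\<lambda>u v. reduce (u @ v)),
                   one = []\<rparr>"

definition subst_hom :: "nat \<Rightarrow> (nat \<Rightarrow> letter list) \<Rightarrow> letter list \<Rightarrow> letter list" where
  "subst_hom n \<sigma> = (\<lambda>w \<in> carrier (free_group n).
      reduce (concat (map (\<lambda>x. if snd x then \<sigma> (fst x) else inv_word (\<sigma> (fst x))) w)))"

definition gen :: "nat \<Rightarrow> letter list" where
  "gen i = [(i, True)]"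

definition A_aut :: "nat \<Rightarrow> nat \<Rightarrow> nat \<Rightarrow> letter list \<Rightarrow> letter list" where
  "A_aut n i j = subst_hom n (\<lambda>k. if k = i then gen i @ gen j else gen k)"

definition B_aut :: "nat \<Rightarrow> nat \<Rightarrow> nat \<Rightarrow> letter list \<Rightarrow> letter list" where
  "B_aut n i j = subst_hom n (\<lambda>k. if k = i then gen j @ gen i else gen k)"

text \<open>Aut(F_n), with multiplication g \<otimes> f = g \<circ> f (library AutoGroup).\<close>
abbreviation Aut_free :: "nat \<Rightarrow> (letter list \<Rightarrow> letter list) monoid" where
  "Aut_free n \<equiv> AutoGroup (free_group n)"

abbreviation S1 :: "complex set" where
  "S1 \<equiv> sphere 0 1"

definition circ :: "real \<Rightarrow> complex" where
  "circ t = cis (2 * pi * t)"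

text \<open>A C^2 lift of an orientation preserving C^2 diffeomorphism of the circle:
  F(t+1) = F(t) + 1, F is C^2 with F' > 0 (the inverse is then C^2 by the inverse
  function theorem).\<close>
definition C2_lift :: "(real \<Rightarrow> real) \<Rightarrow> bool" where
  "C2_lift F \<longleftrightarrow> (\<forall>t. F (t + 1) = F t + 1)
     \<and> (\<exists>F' F''. (\<forall>t. (F has_real_derivative F' t) (at t)
                    \<and> (F' has_real_derivative F'' t) (at t)
                    \<and> F' t > 0)
               \<and> continuous_on UNIV F'')"

text \<open>Elements are maps on complex numbers that act on S^1 as such a diffeomorphism and
  are the identity off S^1 (so that they are determined by their action on S^1).\<close>
definition Diff2_S1 :: "(complex \<Rightarrow> complex) monoid" where
  "Diff2_S1 = \<lparr>carrier = {f. (\<exists>F. C2_lift F \<and> (\<forall>t. f (circ t) = circ (F t)))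
                             \<and> (\<forall>z. z \<notin> S1 \<longrightarrow> f z = z)},
              mult = (\<lambda>f g. f \<circ> g),
              one = id\<rparr>"

definition has_fixed_point_S1 :: "(complex \<Rightarrow> complex) \<Rightarrow> bool" where
  "has_fixed_point_S1 f \<longleftrightarrow> (\<exists>z\<in>S1. f z = z)"

end

theory Submission
  imports Defs
begin

lemma inv_letter_inv[simp]: "inv_letter (inv_letter x) = x"
  by (simp add: inv_letter_def)
lemma inv_letter_neq[simp]: "inv_letter x \<noteq> x" "x \<noteq> inv_letter x"
  by (cases x, simp add: inv_letter_def)+
lemma fst_inv_letter[simp]: "fst (inv_letter x) = fst x" and snd_inv_letter[simp]: "snd (inv_letter x) = (\<not> snd x)"
  by (simp_all add: inv_letter_def)

lemma all_nat_split: "(\<forall>k::nat. P k) = (P 0 \<and> (\<forall>k. P (Suc k)))"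
  by (metis not0_implies_Suc)

lemma reduced_Nil[simp]: "reduced []" and reduced_single[simp]: "reduced [x]"
  by (simp_all add: reduced_def)

lemma reduced_Cons2[simp]: "reduced (x # y # ys) = (y \<noteq> inv_letter x \<and> reduced (y # ys))"
  unfolding reduced_def by (subst all_nat_split) auto

lemma reduced_ConsD: "reduced (x # ys) \<Longrightarrow> reduced ys"
  by (cases ys) auto

lemma push_reduced: "reduced acc \<Longrightarrow> reduced (push_letter x acc)"
  by (cases acc) (auto simp: push_letter_def dest: reduced_ConsD)

lemma cancel1: "reduced acc \<Longrightarrow> push_letter x (push_letter (inv_letter x) acc) = acc"
proof (cases acc)
  case Nil then show ?thesis by (simp add: push_letter_def)
next
  case (Cons y ys)
  assume r: "reduced acc"
  show ?thesis
  proof (cases "y = x")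
    case True
    then show ?thesis using Cons r
      by (cases ys) (auto simp: push_letter_def)
  next
    case False
    then show ?thesis using Cons by (auto simp: push_letter_def)
  qed
qed

lemma fold_reduced: "reduced acc \<Longrightarrow> reduced (foldr push_letter u acc)"
  by (induction u) (auto intro: push_reduced)

lemma reduce_reduced: "reduced (reduce w)"
  unfolding reduce_def by (rule fold_reduced) simp

lemma reduce_id: "reduced w \<Longrightarrow> reduce w = w"
proof (induction w)
  case Nil then show ?case by (simp add: reduce_def)
next
  case (Cons x w)
  have "reduced w" using Cons.prems by (rule reduced_ConsD)
  then have "reduce w = w" by (rule Cons.IH)
  then show ?case using Cons.prems
    by (cases w) (auto simp: reduce_def push_letter_def)
qed

lemma fold_push_r: "reduced acc \<Longrightarrow> reduced r \<Longrightarrow>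
   push_letter x (foldr push_letter r acc) = foldr push_letter (push_letter x r) acc"
proof (cases r)
  case Nil then show ?thesis by (simp add: push_letter_def)
next
  case (Cons y ys)
  assume a: "reduced acc" "reduced r"
  show ?thesis
  proof (cases "y = inv_letter x")
    case True
    have "push_letter x (foldr push_letter r acc)
        = push_letter x (push_letter (inv_letter x) (foldr push_letter ys acc))"
      using Cons True by simp
    also have "\<dots> = foldr push_letter ys acc"
      by (rule cancel1) (rule fold_reduced[OF a(1)])
    finally show ?thesis using Cons True by (simp add: push_letter_def)
  next
    case False
    then show ?thesis using Cons by (simp add: push_letter_def)
  qed
qed

lemma fold_reduce: "reduced acc \<Longrightarrow> foldr push_letter u acc = foldr push_letter (reduce u) acc"
proof (induction u)
  case Nil then show ?case by (simp add: reduce_def)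
next
  case (Cons x u)
  have "foldr push_letter (x # u) acc = push_letter x (foldr push_letter (reduce u) acc)"
    using Cons by simp
  also have "\<dots> = foldr push_letter (push_letter x (reduce u)) acc"
    by (rule fold_push_r[OF Cons.prems reduce_reduced])
  finally show ?case by (simp add: reduce_def)
qed

lemma reduce_append: "reduce (u @ v) = foldr push_letter u (reduce v)"
  by (simp add: reduce_def)

lemma reduce_left: "reduce (u @ v) = reduce (reduce u @ v)"
  unfolding reduce_append by (rule fold_reduce[OF reduce_reduced])

lemma reduce_right: "reduce (u @ v) = reduce (u @ reduce v)"
  by (simp add: reduce_append reduce_id[OF reduce_reduced])

lemma reduce_assoc: "reduce (reduce (u @ v) @ w) = reduce (u @ reduce (v @ w))"
  by (metis append_assoc reduce_left reduce_right)

lemma inv_word_Nil[simp]: "inv_word [] = []"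
  and inv_word_Cons[simp]: "inv_word (x # s) = inv_word s @ [inv_letter x]"
  and inv_word_append[simp]: "inv_word (s @ t) = inv_word t @ inv_word s"
  and inv_word_inv[simp]: "inv_word (inv_word s) = s"
  by (simp_all add: inv_word_def rev_map o_def)

lemma set_inv_word: "fst ` set (inv_word s) = fst ` set s"
  unfolding inv_word_def by (simp add: image_image)

lemma cancel_word: "reduced acc \<Longrightarrow> foldr push_letter (s @ inv_word s) acc = acc"
proof (induction s arbitrary: acc)
  case Nil then show ?case by simp
next
  case (Cons x s)
  have "foldr push_letter ((x # s) @ inv_word (x # s)) acc
      = push_letter x (foldr push_letter (s @ inv_word s) (push_letter (inv_letter x) acc))"
    by simp
  also have "\<dots> = push_letter x (push_letter (inv_letter x) acc)"
    using Cons.IH[OF push_reduced[OF Cons.prems]] by simp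
  also have "\<dots> = acc" by (rule cancel1[OF Cons.prems])
  finally show ?case .
qed

lemma reduce_cancel: "reduce (s @ inv_word s @ r) = reduce r"
  using cancel_word[OF reduce_reduced, of s r] by (simp add: reduce_append)

lemma reduce_cancel': "reduce (inv_word s @ s @ r) = reduce r"
  using reduce_cancel[of "inv_word s" r] by simp

lemma reduce_Nil[simp]: "reduce [] = []" by (simp add: reduce_def)

lemma reduce_inv_cong: "reduce (inv_word s) = reduce (inv_word (reduce s))"
proof -
  let ?r = "reduce s"
  have "reduce (inv_word s @ s @ inv_word ?r) = reduce (inv_word s @ reduce (s @ inv_word ?r))"
    by (rule reduce_right)
  also have "reduce (s @ inv_word ?r) = reduce (?r @ inv_word ?r @ [])"
    by (simp add: reduce_left[of s])
  also have "\<dots> = []" using reduce_cancel[of ?r "[]"] by simp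
  finally have 1: "reduce (inv_word s @ s @ inv_word ?r) = reduce (inv_word s)" by simp
  have "reduce (inv_word s @ s @ inv_word ?r) = reduce (inv_word ?r)"
    by (rule reduce_cancel')
  with 1 show ?thesis by simp
qed

lemma set_push: "set (push_letter x acc) \<subseteq> insert x (set acc)"
  by (cases acc) (auto simp: push_letter_def)

lemma set_fold: "set (foldr push_letter u acc) \<subseteq> set u \<union> set acc"
  by (induction u) (use set_push in fastforce)+

lemma set_reduce: "set (reduce w) \<subseteq> set w"
  using set_fold[of w "[]"] by (simp add: reduce_def)

definition piece :: "(nat \<Rightarrow> letter list) \<Rightarrow> letter \<Rightarrow> letter list" where
  "piece \<sigma> = (\<lambda>x. if snd x then \<sigma> (fst x) else inv_word (\<sigma> (fst x)))"

definition ext :: "(nat \<Rightarrow> letter list) \<Rightarrow> letter list \<Rightarrow> letter list" where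
  "ext \<sigma> w = concat (map (piece \<sigma>) w)"

lemma subst_hom_ext: "w \<in> carrier (free_group n) \<Longrightarrow> subst_hom n \<sigma> w = reduce (ext \<sigma> w)"
  by (simp add: subst_hom_def ext_def piece_def)

lemma ext_Nil[simp]: "ext \<sigma> [] = []" and ext_Cons[simp]: "ext \<sigma> (x # w) = piece \<sigma> x @ ext \<sigma> w"
  and ext_append[simp]: "ext \<sigma> (u @ v) = ext \<sigma> u @ ext \<sigma> v"
  by (simp_all add: ext_def)

lemma piece_inv[simp]: "piece \<sigma> (inv_letter x) = inv_word (piece \<sigma> x)"
  by (simp add: piece_def)

lemma reduce_ext_fold: "reduced acc \<Longrightarrow>
  reduce (ext \<sigma> (foldr push_letter w acc)) = reduce (ext \<sigma> w @ ext \<sigma> acc)"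
proof (induction w)
  case Nil then show ?case by simp
next
  case (Cons x w)
  let ?r = "foldr push_letter w acc"
  have step: "reduce (ext \<sigma> (push_letter x ?r)) = reduce (piece \<sigma> x @ ext \<sigma> ?r)"
  proof (cases ?r)
    case Nil then show ?thesis by (simp add: push_letter_def)
  next
    case (Cons y ys)
    show ?thesis
    proof (cases "y = inv_letter x")
      case True
      then show ?thesis using Cons
        by (simp add: push_letter_def reduce_cancel)
    next
      case False then show ?thesis using Cons by (simp add: push_letter_def)
    qed
  qed
  have "reduce (ext \<sigma> (foldr push_letter (x # w) acc)) = reduce (piece \<sigma> x @ ext \<sigma> ?r)"
    using step by simp
  also have "\<dots> = reduce (piece \<sigma> x @ reduce (ext \<sigma> ?r))" by (rule reduce_right)
  also have "\<dots> = reduce (piece \<sigma> x @ reduce (ext \<sigma> w @ ext \<sigma> acc))" using Cons by simp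
  also have "\<dots> = reduce (ext \<sigma> (x # w) @ ext \<sigma> acc)"
    by (simp add: reduce_right[symmetric])
  finally show ?case .
qed

lemma reduce_ext_reduce: "reduce (ext \<sigma> (reduce w)) = reduce (ext \<sigma> w)"
  using reduce_ext_fold[of "[]" \<sigma> w] by (simp add: reduce_def)

lemma reduce_lr: "reduce (u @ v) = reduce (reduce u @ reduce v)"
  by (metis reduce_left reduce_right)

lemma reduce_concat_cong: "(\<And>x. x \<in> set w \<Longrightarrow> reduce (f x) = reduce (g x)) \<Longrightarrow>
   reduce (concat (map f w)) = reduce (concat (map g w))"
proof (induction w)
  case Nil then show ?case by simp
next
  case (Cons x w)
  have "reduce (concat (map f (x # w))) = reduce (reduce (f x) @ reduce (concat (map f w)))"
    using reduce_lr[of "f x" "concat (map f w)"] by simp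
  also have "\<dots> = reduce (reduce (g x) @ reduce (concat (map g w)))"
    using Cons by simp
  also have "\<dots> = reduce (concat (map g (x # w)))"
    using reduce_lr[of "g x" "concat (map g w)"] by simp
  finally show ?case .
qed

lemma ext_cong:
  assumes h: "\<And>x. x \<in> set w \<Longrightarrow> reduce (\<sigma> (fst x)) = reduce (\<rho> (fst x))"
  shows "reduce (ext \<sigma> w) = reduce (ext \<rho> w)"
  unfolding ext_def
proof (rule reduce_concat_cong)
  fix x assume x: "x \<in> set w"
  have 1: "reduce (\<sigma> (fst x)) = reduce (\<rho> (fst x))" using h[OF x] .
  have 2: "reduce (inv_word (\<sigma> (fst x))) = reduce (inv_word (\<rho> (fst x)))"
  proof -
    have "reduce (inv_word (\<sigma> (fst x))) = reduce (inv_word (reduce (\<sigma> (fst x))))"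
      by (rule reduce_inv_cong)
    also have "\<dots> = reduce (inv_word (reduce (\<rho> (fst x))))" using 1 by simp
    also have "\<dots> = reduce (inv_word (\<rho> (fst x)))"
      by (rule reduce_inv_cong[symmetric])
    finally show ?thesis .
  qed
  show "reduce (piece \<sigma> x) = reduce (piece \<rho> x)"
    using 1 2 by (simp add: piece_def)
qed

lemma ext_inv: "ext \<sigma> (inv_word s) = inv_word (ext \<sigma> s)"
proof (induction s)
  case Nil then show ?case by simp
next
  case (Cons x s)
  have "ext \<sigma> (inv_word (x # s)) = ext \<sigma> (inv_word s) @ piece \<sigma> (inv_letter x)"
    by simp
  also have "\<dots> = inv_word (ext \<sigma> s) @ inv_word (piece \<sigma> x)"
    by (simp only: Cons.IH piece_inv)
  also have "\<dots> = inv_word (ext \<sigma> (x # s))" by simp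
  finally show ?case .
qed

lemma ext_ext: "ext \<sigma> (ext \<tau> w) = ext (\<lambda>k. ext \<sigma> (\<tau> k)) w"
proof (induction w)
  case Nil then show ?case by simp
next
  case (Cons x w)
  have "ext \<sigma> (piece \<tau> x) = piece (\<lambda>k. ext \<sigma> (\<tau> k)) x"
    by (cases "snd x") (simp_all add: piece_def ext_inv)
  then show ?case using Cons by simp
qed

lemma ext_gen: "ext gen w = w"
proof (induction w)
  case Nil then show ?case by simp
next
  case (Cons x w)
  have "piece gen x = [x]"
    by (cases x) (auto simp: piece_def gen_def inv_word_def inv_letter_def)
  then show ?case using Cons by simp
qed


lemma carrier_fg: "w \<in> carrier (free_group n) \<longleftrightarrow> reduced w \<and> (\<forall>x\<in>set w. 1 \<le> fst x \<and> fst x \<le> n)"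
  by (simp add: free_group_def)

lemma mult_fg: "u \<otimes>\<^bsub>free_group n\<^esub> v = reduce (u @ v)"
  by (simp add: free_group_def)

definition good :: "nat \<Rightarrow> (nat \<Rightarrow> letter list) \<Rightarrow> bool" where
  "good n \<sigma> \<longleftrightarrow> (\<forall>k\<in>{1..n}. \<forall>x\<in>set (\<sigma> k). 1 \<le> fst x \<and> fst x \<le> n)"

lemma reduce_in: "\<forall>x\<in>set w. 1 \<le> fst x \<and> fst x \<le> n \<Longrightarrow> reduce w \<in> carrier (free_group n)"
  using set_reduce[of w] reduce_reduced[of w] by (auto simp: carrier_fg)

lemma set_ext: "x \<in> set (ext \<sigma> w) \<Longrightarrow> \<exists>y\<in>set w. fst x \<in> fst ` set (\<sigma> (fst y))"
proof (induction w)
  case Nil then show ?case by simp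
next
  case (Cons y w)
  show ?case
  proof (cases "x \<in> set (piece \<sigma> y)")
    case True
    then have "fst x \<in> fst ` set (piece \<sigma> y)" by simp
    then have "fst x \<in> fst ` set (\<sigma> (fst y))"
      by (cases "snd y") (simp_all add: piece_def set_inv_word)
    then show ?thesis by auto
  next
    case False
    then show ?thesis using Cons by auto
  qed
qed

lemma ext_in: "good n \<sigma> \<Longrightarrow> w \<in> carrier (free_group n) \<Longrightarrow>
   \<forall>x\<in>set (ext \<sigma> w). 1 \<le> fst x \<and> fst x \<le> n"
proof
  fix x assume g: "good n \<sigma>" and w: "w \<in> carrier (free_group n)" and x: "x \<in> set (ext \<sigma> w)"
  obtain y z where y: "y \<in> set w" and z: "z \<in> set (\<sigma> (fst y))" and "fst x = fst z"
    using set_ext[OF x] by auto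
  moreover have "fst y \<in> {1..n}" using w y by (auto simp: carrier_fg)
  ultimately show "1 \<le> fst x \<and> fst x \<le> n" using g by (auto simp: good_def)
qed

lemma subst_in: "good n \<sigma> \<Longrightarrow> w \<in> carrier (free_group n) \<Longrightarrow>
   subst_hom n \<sigma> w \<in> carrier (free_group n)"
  by (simp add: subst_hom_ext) (rule reduce_in[OF ext_in])

lemma mult_closed: "u \<in> carrier (free_group n) \<Longrightarrow> v \<in> carrier (free_group n) \<Longrightarrow>
   reduce (u @ v) \<in> carrier (free_group n)"
  by (rule reduce_in) (auto simp: carrier_fg)

lemma subst_mult: "u \<in> carrier (free_group n) \<Longrightarrow> v \<in> carrier (free_group n) \<Longrightarrow>
   subst_hom n \<sigma> (reduce (u @ v)) = reduce (subst_hom n \<sigma> u @ subst_hom n \<sigma> v)"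
proof -
  assume u: "u \<in> carrier (free_group n)" and v: "v \<in> carrier (free_group n)"
  have "subst_hom n \<sigma> (reduce (u @ v)) = reduce (ext \<sigma> (reduce (u @ v)))"
    by (rule subst_hom_ext[OF mult_closed[OF u v]])
  also have "\<dots> = reduce (ext \<sigma> u @ ext \<sigma> v)" by (simp add: reduce_ext_reduce)
  also have "\<dots> = reduce (reduce (ext \<sigma> u) @ reduce (ext \<sigma> v))" by (rule reduce_lr)
  finally show ?thesis using u v by (simp add: subst_hom_ext)
qed

lemma subst_after: "reduce (ext \<rho> w) \<in> carrier (free_group n) \<Longrightarrow>
   subst_hom n \<sigma> (reduce (ext \<rho> w)) = reduce (ext (\<lambda>k. ext \<sigma> (\<rho> k)) w)"
  by (simp add: subst_hom_ext reduce_ext_reduce ext_ext)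

lemma subst_gen_cong: "w \<in> carrier (free_group n) \<Longrightarrow>
  (\<And>k. k \<in> {1..n} \<Longrightarrow> reduce (\<rho> k) = gen k) \<Longrightarrow> reduce (ext \<rho> w) = w"
proof -
  assume w: "w \<in> carrier (free_group n)" and h: "\<And>k. k \<in> {1..n} \<Longrightarrow> reduce (\<rho> k) = gen k"
  have "reduce (ext \<rho> w) = reduce (ext gen w)"
  proof (rule ext_cong)
    fix x assume "x \<in> set w"
    then have "fst x \<in> {1..n}" using w by (auto simp: carrier_fg)
    then show "reduce (\<rho> (fst x)) = reduce (gen (fst x))"
      using h by (simp add: gen_def reduce_id)
  qed
  also have "\<dots> = w" using w by (simp add: ext_gen reduce_id carrier_fg)
  finally show ?thesis .
qed

lemma subst_auto:
  assumes g: "good n \<sigma>" "good n \<sigma>'"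
    and i1: "\<And>k. k \<in> {1..n} \<Longrightarrow> reduce (ext \<sigma> (\<sigma>' k)) = gen k"
    and i2: "\<And>k. k \<in> {1..n} \<Longrightarrow> reduce (ext \<sigma>' (\<sigma> k)) = gen k"
  shows "subst_hom n \<sigma> \<in> auto (free_group n)"
proof -
  let ?W = "carrier (free_group n)"
  have inW: "subst_hom n \<sigma> w \<in> ?W" "subst_hom n \<sigma>' w \<in> ?W" if "w \<in> ?W" for w
    using subst_in[OF g(1) that] subst_in[OF g(2) that] by auto
  have hom: "subst_hom n \<sigma> \<in> hom (free_group n) (free_group n)"
    unfolding hom_def using inW by (auto simp: mult_fg subst_mult)
  have c1: "subst_hom n \<sigma>' (subst_hom n \<sigma> w) = w" if w: "w \<in> ?W" for w
  proof -
    have "subst_hom n \<sigma>' (subst_hom n \<sigma> w) = reduce (ext (\<lambda>k. ext \<sigma>' (\<sigma> k)) w)"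
      using subst_after[of \<sigma> w n \<sigma>'] inW(1)[OF w] w by (simp add: subst_hom_ext)
    also have "\<dots> = w" by (rule subst_gen_cong[OF w i2])
    finally show ?thesis .
  qed
  have c2: "subst_hom n \<sigma> (subst_hom n \<sigma>' w) = w" if w: "w \<in> ?W" for w
  proof -
    have "subst_hom n \<sigma> (subst_hom n \<sigma>' w) = reduce (ext (\<lambda>k. ext \<sigma> (\<sigma>' k)) w)"
      using subst_after[of \<sigma>' w n \<sigma>] inW(2)[OF w] w by (simp add: subst_hom_ext)
    also have "\<dots> = w" by (rule subst_gen_cong[OF w i1])
    finally show ?thesis .
  qed
  have "bij_betw (subst_hom n \<sigma>) ?W ?W"
    by (rule bij_betw_byWitness[where f'="subst_hom n \<sigma>'"]) (use c1 c2 inW in auto)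
  moreover have "subst_hom n \<sigma> \<in> extensional ?W"
    by (simp add: subst_hom_def)
  ultimately show ?thesis using hom by (simp add: auto_def Bij_def)
qed

lemma mult_Aut: "f \<in> auto G \<Longrightarrow> g \<in> auto G \<Longrightarrow> f \<otimes>\<^bsub>AutoGroup G\<^esub> g = compose (carrier G) f g"
  by (simp add: AutoGroup_def BijGroup_def auto_def)


definition sig :: "bool \<Rightarrow> nat \<Rightarrow> nat \<Rightarrow> nat \<Rightarrow> letter list" where
  "sig b i j k = (if k = i then (if b then [(i,True),(j,True)] else [(j,True),(i,True)]) else [(k,True)])"

definition sigi :: "bool \<Rightarrow> nat \<Rightarrow> nat \<Rightarrow> nat \<Rightarrow> letter list" where
  "sigi b i j k = (if k = i then (if b then [(i,True),(j,False)] else [(j,False),(i,True)]) else [(k,True)])"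

lemma A_sig: "A_aut n i j = subst_hom n (sig True i j)"
proof -
  have "(\<lambda>k. if k = i then gen i @ gen j else gen k) = sig True i j"
    by (rule ext) (simp add: sig_def gen_def)
  then show ?thesis by (simp add: A_aut_def)
qed

lemma B_sig: "B_aut n i j = subst_hom n (sig False i j)"
proof -
  have "(\<lambda>k. if k = i then gen j @ gen i else gen k) = sig False i j"
    by (rule ext) (simp add: sig_def gen_def)
  then show ?thesis by (simp add: B_aut_def)
qed

lemma good_sig: "i \<in> {1..n} \<Longrightarrow> j \<in> {1..n} \<Longrightarrow> good n (sig b i j)"
  by (auto simp: good_def sig_def)

lemma good_sigi: "i \<in> {1..n} \<Longrightarrow> j \<in> {1..n} \<Longrightarrow> good n (sigi b i j)"
  by (auto simp: good_def sigi_def)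

lemmas comp_simps = sig_def sigi_def piece_def gen_def inv_word_def inv_letter_def reduce_def push_letter_def

lemma sig_auto: "i \<in> {1..n} \<Longrightarrow> j \<in> {1..n} \<Longrightarrow> i \<noteq> j \<Longrightarrow>
   subst_hom n (sig b i j) \<in> auto (free_group n)"
  by (rule subst_auto[where \<sigma>'="sigi b i j"]) (auto simp: good_sig good_sigi comp_simps)

lemma comp2: "good n \<tau> \<Longrightarrow> w \<in> carrier (free_group n) \<Longrightarrow>
  compose (carrier (free_group n)) (subst_hom n \<sigma>) (subst_hom n \<tau>) w
   = reduce (ext (\<lambda>m. ext \<sigma> (\<tau> m)) w)"
  using subst_after[of \<tau> w n \<sigma>] subst_in[of n \<tau> w]
  by (simp add: compose_def subst_hom_ext)

lemma comp3: "good n \<tau> \<Longrightarrow> good n \<rho> \<Longrightarrow> w \<in> carrier (free_group n) \<Longrightarrow>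
  compose (carrier (free_group n)) (subst_hom n \<sigma>)
     (compose (carrier (free_group n)) (subst_hom n \<tau>) (subst_hom n \<rho>)) w
   = reduce (ext (\<lambda>m. ext \<sigma> (ext \<tau> (\<rho> m))) w)"
proof -
  assume g: "good n \<tau>" "good n \<rho>" and w: "w \<in> carrier (free_group n)"
  have yz: "compose (carrier (free_group n)) (subst_hom n \<tau>) (subst_hom n \<rho>) w
     = reduce (ext (\<lambda>m. ext \<tau> (\<rho> m)) w)" by (rule comp2[OF g(2) w])
  have "compose (carrier (free_group n)) (subst_hom n \<tau>) (subst_hom n \<rho>) w \<in> carrier (free_group n)"
    using subst_in[OF g(1) subst_in[OF g(2) w]] w by (simp add: compose_def)
  then have mem: "reduce (ext (\<lambda>m. ext \<tau> (\<rho> m)) w) \<in> carrier (free_group n)" using yz by simp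
  show ?thesis using w yz subst_after[OF mem, of \<sigma>] by (simp add: compose_def ext_ext)
qed

lemma restrict_eqI: "(\<And>w. w \<in> A \<Longrightarrow> f w = g w) \<Longrightarrow> f \<in> extensional A \<Longrightarrow> g \<in> extensional A \<Longrightarrow> f = g"
  by (rule extensionalityI)

lemma relations:
  fixes b :: bool
  assumes ijk: "i \<in> {1..n}" "j \<in> {1..n}" "k \<in> {1..n}" "i \<noteq> j" "i \<noteq> k" "k \<noteq> j"
  defines "W \<equiv> carrier (free_group n)"
  defines "x \<equiv> subst_hom n (sig b i k)" and "y \<equiv> subst_hom n (sig b k j)" and "z \<equiv> subst_hom n (sig b i j)"
  shows "compose W y x = compose W x (compose W y z)" and "compose W z y = compose W y z"
proof -
  have g: "good n (sig b i k)" "good n (sig b k j)" "good n (sig b i j)"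
    using ijk by (auto intro: good_sig)
  show "compose W y x = compose W x (compose W y z)"
  proof (rule extensionalityI[where A=W])
    fix w assume w: "w \<in> W"
    have "compose W y x w = reduce (ext (\<lambda>m. ext (sig b k j) (sig b i k m)) w)"
      unfolding W_def x_def y_def by (rule comp2[OF g(1) w[unfolded W_def]])
    also have "\<dots> = reduce (ext (\<lambda>m. ext (sig b i k) (ext (sig b k j) (sig b i j m))) w)"
      by (rule ext_cong) (use ijk in \<open>auto simp: comp_simps\<close>)
    also have "\<dots> = compose W x (compose W y z) w"
      unfolding W_def x_def y_def z_def by (rule comp3[OF g(2) g(3) w[unfolded W_def], symmetric])
    finally show "compose W y x w = compose W x (compose W y z) w" .
  qed (simp_all add: compose_def)
  show "compose W z y = compose W y z"
  proof (rule extensionalityI[where A=W])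
    fix w assume w: "w \<in> W"
    have "compose W z y w = reduce (ext (\<lambda>m. ext (sig b i j) (sig b k j m)) w)"
      unfolding W_def z_def y_def by (rule comp2[OF g(2) w[unfolded W_def]])
    also have "\<dots> = reduce (ext (\<lambda>m. ext (sig b k j) (sig b i j m)) w)"
      by (rule ext_cong) (use ijk in \<open>auto simp: comp_simps\<close>)
    also have "\<dots> = compose W y z w"
      unfolding W_def z_def y_def by (rule comp2[OF g(3) w[unfolded W_def], symmetric])
    finally show "compose W z y w = compose W y z w" .
  qed (simp_all add: compose_def)
qed


definition lift :: "(real \<Rightarrow> real) \<Rightarrow> bool" where
  "lift F \<longleftrightarrow> continuous_on UNIV F \<and> strict_mono F \<and> (\<forall>t. F (t + 1) = F t + 1)"

lemma C2_lift_lift: "C2_lift F \<Longrightarrow> lift F"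
proof -
  assume "C2_lift F"
  then obtain F' where per: "\<forall>t. F (t + 1) = F t + 1"
    and d: "\<And>t. (F has_real_derivative F' t) (at t) \<and> F' t > 0"
    unfolding C2_lift_def by blast
  have "continuous_on UNIV F"
    by (rule continuous_at_imp_continuous_on) (use d DERIV_isCont in blast)
  moreover have "strict_mono F"
    unfolding strict_mono_def
  proof (intro allI impI)
    fix a b :: real assume "a < b"
    then show "F a < F b"
      by (rule DERIV_pos_imp_increasing) (use d in blast)
  qed
  ultimately show ?thesis using per by (simp add: lift_def)
qed

lemma cis_one: "cis (2 * pi * x) = 1 \<longleftrightarrow> x \<in> \<int>"
proof -
  have "cis (2 * pi * x) = 1 \<longleftrightarrow> (\<exists>n::int. 2 * pi * x = of_int (2 * n) * pi)"
    by (simp add: cis_conv_exp exp_eq_1)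
  also have "\<dots> \<longleftrightarrow> (\<exists>n::int. x = of_int n)"
    by (auto simp: algebra_simps)
  also have "\<dots> \<longleftrightarrow> x \<in> \<int>" by (auto elim: Ints_cases)
  finally show ?thesis .
qed

lemma circ_eq: "circ a = circ b \<longleftrightarrow> a - b \<in> \<int>"
proof -
  have "circ a = circ b * cis (2 * pi * (a - b))"
    by (simp add: circ_def cis_mult algebra_simps)
  moreover have "circ b \<noteq> 0" by (simp add: circ_def)
  ultimately have "circ a = circ b \<longleftrightarrow> cis (2 * pi * (a - b)) = 1"
    by auto
  then show ?thesis by (simp add: cis_one)
qed

lemma circ_S1: "circ t \<in> S1"
  by (simp add: circ_def)

lemma lift_nat: "lift F \<Longrightarrow> F (t + real m) = F t + real m"
proof (induction m arbitrary: t)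
  case 0 then show ?case by simp
next
  case (Suc m)
  have "F (t + real (Suc m)) = F ((t + real m) + 1)" by (simp add: algebra_simps)
  also have "\<dots> = F (t + real m) + 1" using Suc.prems by (simp add: lift_def)
  finally show ?case using Suc by simp
qed

lemma lift_int: "lift F \<Longrightarrow> F (t + of_int m) = F t + of_int m"
proof (cases "m \<ge> 0")
  case True
  assume "lift F"
  then show ?thesis using lift_nat[of F t "nat m"] True by simp
next
  case False
  assume l: "lift F"
  have "F ((t + of_int m) + real (nat (-m))) = F (t + of_int m) + real (nat (-m))"
    by (rule lift_nat[OF l])
  then show ?thesis using False by simp
qed

lemma int_const:
  fixes g :: "real \<Rightarrow> real"
  assumes c: "continuous_on UNIV g" and i: "\<And>t. g t \<in> \<int>"
  shows "g t = g 0"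
proof (rule ccontr)
  assume ne: "g t \<noteq> g 0"
  have conn: "connected (range g)"
    by (rule connected_continuous_image[OF c connected_UNIV])
  obtain m where m: "g 0 = of_int m" using i[of 0] by (auto elim: Ints_cases)
  obtain k where k: "g t = of_int k" using i[of t] by (auto elim: Ints_cases)
  have "g 0 + 1/2 \<in> range g \<or> g 0 - 1/2 \<in> range g"
  proof (cases "g 0 < g t")
    case True
    then have "m + 1 \<le> k" using m k by simp
    then have "g 0 + 1/2 \<le> g t" using m k by (simp add: of_int_le_iff[symmetric])
    then have "g 0 + 1/2 \<in> {g 0..g t}" by simp
    then show ?thesis using connected_contains_Icc[OF conn, of "g 0" "g t"] by blast
  next
    case False
    then have "g t < g 0" using ne by simp
    then have "k + 1 \<le> m" using m k by simp
    then have "g t \<le> g 0 - 1/2" using m k by (simp add: of_int_le_iff[symmetric])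
    then have "g 0 - 1/2 \<in> {g t..g 0}" by simp
    then show ?thesis using connected_contains_Icc[OF conn, of "g t" "g 0"] by blast
  qed
  then obtain s where "g s = g 0 + 1/2 \<or> g s = g 0 - 1/2" by (metis imageE)
  moreover obtain r where "g s = of_int r" using i[of s] by (auto elim: Ints_cases)
  ultimately have "of_int r = (of_int m + 1/2 :: real) \<or> of_int r = (of_int m - 1/2 :: real)"
    using m by auto
  then have "2 * of_int r = (2 * of_int m + 1 :: real) \<or> 2 * of_int r = (2 * of_int m - 1 :: real)"
    by auto
  then have "2 * r = 2 * m + 1 \<or> 2 * r = 2 * m - 1"
    by (metis (mono_tags, opaque_lifting) of_int_1 of_int_add of_int_diff of_int_eq_iff of_int_mult of_int_numeral)
  then show False by presburger
qed

lemma disp_periodic: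
  assumes l: "lift F"
  shows "F t - t = F (t - of_int \<lfloor>t\<rfloor>) - (t - of_int \<lfloor>t\<rfloor>)"
  using lift_int[OF l, of "t - of_int \<lfloor>t\<rfloor>" "\<lfloor>t\<rfloor>"] by simp

lemma disp_bounds:
  assumes l: "lift F"
  shows "\<exists>t0 t1. \<forall>t. F t0 - t0 \<le> F t - t \<and> F t - t \<le> F t1 - t1"
proof -
  have c: "continuous_on {0..1} (\<lambda>t. F t - t)"
    using l unfolding lift_def
    by (intro continuous_intros) (auto intro: continuous_on_subset)
  obtain t0 where t0: "t0 \<in> {0..1}" "\<forall>y\<in>{0..1}. F t0 - t0 \<le> F y - y"
    using continuous_attains_inf[OF compact_Icc _ c] by auto
  obtain t1 where t1: "t1 \<in> {0..1}" "\<forall>y\<in>{0..1}. F y - y \<le> F t1 - t1"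
    using continuous_attains_sup[OF compact_Icc _ c] by auto
  have "F t0 - t0 \<le> F t - t \<and> F t - t \<le> F t1 - t1" for t
  proof -
    have mem: "t - of_int \<lfloor>t\<rfloor> \<in> {0..1}"
      using floor_correct[of t] by (simp del: floor_correct) linarith
    show ?thesis using t0(2) t1(2) mem disp_periodic[OF l, of t] by metis
  qed
  then show ?thesis by blast
qed

lemma funpow_int: "lift F \<Longrightarrow> (F ^^ N) (t + of_int m) = (F ^^ N) t + of_int m"
  by (induction N arbitrary: t) (auto simp: lift_int)

lemma funpow_mono: "lift F \<Longrightarrow> s \<le> t \<Longrightarrow> (F ^^ N) s \<le> (F ^^ N) t"
proof (induction N)
  case 0 then show ?case by simp
next
  case (Suc N)
  then have "(F ^^ N) s \<le> (F ^^ N) t" by simp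
  moreover have "mono F" using Suc.prems by (simp add: lift_def strict_mono_mono)
  ultimately show ?case by (simp add: monoD)
qed

lemma disp_upper: "lift F \<Longrightarrow> (F ^^ N) (s + r) \<le> (F ^^ N) s + r + 1"
proof -
  assume l: "lift F"
  have "(F ^^ N) (s + r) \<le> (F ^^ N) (s + of_int \<lceil>r\<rceil>)"
    by (rule funpow_mono[OF l]) simp
  also have "\<dots> = (F ^^ N) s + of_int \<lceil>r\<rceil>" by (rule funpow_int[OF l])
  also have "\<dots> \<le> (F ^^ N) s + r + 1" by linarith
  finally show ?thesis .
qed

lemma disp_lower: "lift F \<Longrightarrow> (F ^^ N) s + r - 1 \<le> (F ^^ N) (s + r)"
proof -
  assume l: "lift F"
  have "(F ^^ N) s + r - 1 \<le> (F ^^ N) s + of_int \<lfloor>r\<rfloor>" by linarith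
  also have "\<dots> = (F ^^ N) (s + of_int \<lfloor>r\<rfloor>)" by (rule funpow_int[OF l, symmetric])
  also have "\<dots> \<le> (F ^^ N) (s + r)"
    by (rule funpow_mono[OF l]) simp
  finally show ?thesis .
qed


lemma lift_cont: "lift F \<Longrightarrow> continuous_on UNIV F"
  by (simp add: lift_def)

lemma lift_strict: "lift F \<Longrightarrow> a < b \<Longrightarrow> F a < F b"
  by (simp add: lift_def strict_mono_def)

lemma cont_comp: "continuous_on UNIV f \<Longrightarrow> continuous_on UNIV g \<Longrightarrow> continuous_on UNIV (\<lambda>t. f (g t))"
  using continuous_on_compose[of UNIV g f] by (simp add: o_def continuous_on_subset)

lemma arith_contra:
  fixes a :: int and C d M :: real
  assumes d: "d > 0" and M: "M < 1"
    and up: "\<And>N::nat. of_int a * real N \<le> C - real N * d"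
    and lo: "\<And>N::nat. of_int a * real N \<ge> - C - real N * M"
  shows False
proof (cases "a \<ge> 0")
  case True
  obtain N :: nat where N: "C < real N * d" using ex_less_of_nat_mult[OF d] by blast
  have "0 \<le> of_int a * real N" using True by simp
  with up[of N] N show False by linarith
next
  case False
  then have a: "of_int a \<le> (-1::real)" by simp
  have "0 < 1 - M" using M by simp
  obtain N :: nat where N: "C < real N * (1 - M)" using ex_less_of_nat_mult[OF \<open>0 < 1 - M\<close>] by blast
  have "of_int a * real N \<le> - real N" using mult_right_mono[OF a, of "real N"] by simp
  with lo[of N] N show False by (simp add: algebra_simps)
qed

lemma core:
  assumes lX: "lift X" and lY: "lift Y" and lZ: "lift Z"
    and Zr: "\<And>t. t < Z t \<and> Z t < t + 1"
    and r1: "\<And>t. Y (X t) - X (Y (Z t)) \<in> \<int>"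
    and r2: "\<And>t. Z (Y t) - Y (Z t) \<in> \<int>"
  shows False
proof -
  have cX: "continuous_on UNIV X" and cY: "continuous_on UNIV Y" and cZ: "continuous_on UNIV Z"
    by (rule lift_cont[OF lX], rule lift_cont[OF lY], rule lift_cont[OF lZ])
  have c1: "continuous_on UNIV (\<lambda>t. Y (X t) - X (Y (Z t)))"
    by (rule continuous_on_diff[OF cont_comp[OF cY cX] cont_comp[OF cX cont_comp[OF cY cZ]]])
  have a_const: "Y (X t) - X (Y (Z t)) = Y (X 0) - X (Y (Z 0))" for t
    using int_const[OF c1 r1] .
  obtain a :: int where a: "Y (X 0) - X (Y (Z 0)) = of_int a"
    using r1[of 0] by (auto elim: Ints_cases)
  have rel1: "Y (X t) = X (Y (Z t)) + of_int a" for t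
    using a_const[of t] a by simp
  have c2: "continuous_on UNIV (\<lambda>t. Z (Y t) - Y (Z t))"
    by (rule continuous_on_diff[OF cont_comp[OF cZ cY] cont_comp[OF cY cZ]])
  have b_const: "Z (Y t) - Y (Z t) = Z (Y 0) - Y (Z 0)" for t
    using int_const[OF c2 r2] .
  obtain b :: int where b: "Z (Y 0) - Y (Z 0) = of_int b"
    using r2[of 0] by (auto elim: Ints_cases)
  have "Y 0 < Y (Z 0)" using Zr[of 0] lift_strict[OF lY] by simp
  moreover have "Y (Z 0) < Y 1" using Zr[of 0] lift_strict[OF lY] by simp
  moreover have "Y 1 = Y 0 + 1" using lY unfolding lift_def by (metis add_0)
  moreover have "Y 0 < Z (Y 0)" "Z (Y 0) < Y 0 + 1" using Zr[of "Y 0"] by auto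
  ultimately have "- 1 < (of_int b :: real)" "(of_int b :: real) < 1" using b by linarith+
  then have "b = 0" by simp
  then have comm: "Z (Y t) = Y (Z t)" for t using b_const[of t] b by simp
  obtain t0 t1 where zb: "\<And>t. Z t0 - t0 \<le> Z t - t \<and> Z t - t \<le> Z t1 - t1"
    using disp_bounds[OF lZ] by blast
  define d where "d = Z t0 - t0"
  define M where "M = Z t1 - t1"
  have d: "d > 0" using Zr[of t0] by (simp add: d_def)
  have M: "M < 1" using Zr[of t1] by (simp add: M_def)
  obtain s0 s1 where xb: "\<And>t. X s0 - s0 \<le> X t - t \<and> X t - t \<le> X s1 - s1"
    using disp_bounds[OF lX] by blast
  define p where "p = X s0 - s0"
  define q where "q = X s1 - s1"
  have pq: "p \<le> X t - t" "X t - t \<le> q" for t using xb[of t] by (simp_all add: p_def q_def)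
  have commN: "Z ((Y ^^ N) t) = (Y ^^ N) (Z t)" for N t
    by (induction N) (simp_all add: comm)
  have ZN: "t + real N * d \<le> (Z ^^ N) t \<and> (Z ^^ N) t \<le> t + real N * M" for N t
  proof (induction N)
    case 0 then show ?case by simp
  next
    case (Suc N)
    have "d \<le> Z ((Z ^^ N) t) - (Z ^^ N) t" "Z ((Z ^^ N) t) - (Z ^^ N) t \<le> M"
      using zb[of "(Z ^^ N) t"] by (simp_all add: d_def M_def)
    then show ?case using Suc by (simp add: algebra_simps)
  qed
  have relN: "(Y ^^ N) (X t) = X ((Y ^^ N) ((Z ^^ N) t)) + of_int (a * int N)" for N t
  proof (induction N)
    case 0 then show ?case by simp
  next
    case (Suc N)
    let ?s = "(Y ^^ N) ((Z ^^ N) t)"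
    have "(Y ^^ Suc N) (X t) = Y (X ?s + of_int (a * int N))" using Suc by simp
    also have "\<dots> = Y (X ?s) + of_int (a * int N)" by (rule lift_int[OF lY])
    also have "\<dots> = X (Y (Z ?s)) + of_int a + of_int (a * int N)" by (simp add: rel1)
    also have "Z ?s = (Y ^^ N) ((Z ^^ Suc N) t)" by (simp add: commN)
    also have "X (Y ((Y ^^ N) ((Z ^^ Suc N) t))) + of_int a + of_int (a * int N)
        = X ((Y ^^ Suc N) ((Z ^^ Suc N) t)) + of_int (a * int (Suc N))"
      by (simp add: algebra_simps)
    finally show ?case .
  qed
  have up: "of_int a * real N \<le> (q - p + 2) - real N * d" for N :: nat
  proof -
    let ?P = "Y ^^ N"
    let ?u = "(Z ^^ N) 0"
    have L1: "?P (X 0) \<le> ?P 0 + X 0 + 1" using disp_upper[OF lY, of N 0 "X 0"] by simp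
    have L2: "X 0 \<le> q" using pq(2)[of 0] by simp
    have R1: "?P 0 + ?u - 1 \<le> ?P ?u" using disp_lower[OF lY, of N 0 ?u] by simp
    have R2: "real N * d \<le> ?u" using ZN[of 0 N] by simp
    have R3: "?P ?u + p \<le> X (?P ?u)" using pq(1)[of "?P ?u"] by simp
    have "of_int a * real N = ?P (X 0) - X (?P ?u)" using relN[of N 0] by simp
    then show ?thesis using L1 L2 R1 R2 R3 by linarith
  qed
  have lo: "of_int a * real N \<ge> - (q - p + 2) - real N * M" for N :: nat
  proof -
    let ?P = "Y ^^ N"
    let ?u = "(Z ^^ N) 0"
    have L1: "?P 0 + X 0 - 1 \<le> ?P (X 0)" using disp_lower[OF lY, of N 0 "X 0"] by simp
    have L2: "p \<le> X 0" using pq(1)[of 0] by simp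
    have R1: "?P ?u \<le> ?P 0 + ?u + 1" using disp_upper[OF lY, of N 0 ?u] by simp
    have R2: "?u \<le> real N * M" using ZN[of 0 N] by simp
    have R3: "X (?P ?u) \<le> ?P ?u + q" using pq(2)[of "?P ?u"] by simp
    have "of_int a * real N = ?P (X 0) - X (?P ?u)" using relN[of N 0] by simp
    then show ?thesis using L1 L2 R1 R2 R3 by linarith
  qed
  show False by (rule arith_contra[OF d M up lo])
qed


lemma normalize_contra:
  assumes lX: "lift X" and lY: "lift Y" and lZ: "lift Z"
    and r1: "\<And>t. Y (X t) - X (Y (Z t)) \<in> \<int>"
    and r2: "\<And>t. Z (Y t) - Y (Z t) \<in> \<int>"
    and nf: "\<And>t. Z t - t \<notin> \<int>"
  shows False
proof -
  define m where "m = \<lfloor>Z 0\<rfloor>"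
  define Z' where "Z' = (\<lambda>t. Z t + of_int (- m))"
  have cZ: "continuous_on UNIV Z" using lZ by (simp add: lift_def)
  have cZ': "continuous_on UNIV Z'" unfolding Z'_def by (intro continuous_intros cZ)
  have lZ': "lift Z'"
    using lZ cZ' unfolding lift_def Z'_def strict_mono_def by auto
  define h where "h = (\<lambda>t. Z' t - t)"
  have ch: "continuous_on UNIV h" unfolding h_def by (intro continuous_intros cZ')
  have hni: "h t \<notin> \<int>" for t
  proof
    assume "h t \<in> \<int>"
    then have "h t + of_int m \<in> \<int>" by simp
    moreover have "h t + of_int m = Z t - t" by (simp add: h_def Z'_def)
    ultimately show False using nf by simp
  qed
  have h0: "0 \<le> h 0" "h 0 < 1" unfolding h_def Z'_def m_def by linarith+
  have h0': "0 < h 0" using h0(1) hni[of 0] by (cases "h 0 = 0") auto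
  have conn: "connected (range h)" by (rule connected_continuous_image[OF ch connected_UNIV])
  have hb: "0 < h t \<and> h t < 1" for t
  proof (rule ccontr)
    assume "\<not> (0 < h t \<and> h t < 1)"
    then have "0 \<in> range h \<or> 1 \<in> range h"
    proof (cases "h t \<le> 0")
      case True
      then have "0 \<in> {h t..h 0}" using h0' by simp
      then show ?thesis using connected_contains_Icc[OF conn, of "h t" "h 0"] by blast
    next
      case False
      then have "1 \<le> h t" using \<open>\<not> (0 < h t \<and> h t < 1)\<close> by simp
      then have "1 \<in> {h 0..h t}" using h0 by simp
      then show ?thesis using connected_contains_Icc[OF conn, of "h 0" "h t"] by blast
    qed
    then obtain s where "h s = 0 \<or> h s = 1" by (metis imageE)
    then have "h s \<in> \<int>" by auto
    then show False using hni by blast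
  qed
  have Zr: "t < Z' t \<and> Z' t < t + 1" for t using hb[of t] by (simp add: h_def)
  have r1': "Y (X t) - X (Y (Z' t)) \<in> \<int>" for t
  proof -
    have "X (Y (Z' t)) = X (Y (Z t)) + of_int (- m)"
      unfolding Z'_def lift_int[OF lY] lift_int[OF lX] ..
    then have "Y (X t) - X (Y (Z' t)) = (Y (X t) - X (Y (Z t))) + of_int m" by simp
    then show ?thesis by (simp only:) (rule Ints_add[OF r1[of t] Ints_of_int[of m]])
  qed
  have r2': "Z' (Y t) - Y (Z' t) \<in> \<int>" for t
  proof -
    have "Y (Z' t) = Y (Z t) + of_int (- m)"
      unfolding Z'_def lift_int[OF lY] ..
    then have "Z' (Y t) - Y (Z' t) = Z (Y t) - Y (Z t)" by (simp add: Z'_def)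
    then show ?thesis using r2[of t] by simp
  qed
  show False by (rule core[OF lX lY lZ' Zr r1' r2'])
qed

lemma carrier_Aut: "carrier (Aut_free n) = auto (free_group n)"
  by (simp add: AutoGroup_def BijGroup_def)

lemma mult_D: "f \<otimes>\<^bsub>Diff2_S1\<^esub> g = f \<circ> g"
  by (simp add: Diff2_S1_def)

lemma carrier_D: "f \<in> carrier Diff2_S1 \<Longrightarrow> \<exists>F. lift F \<and> (\<forall>t. f (circ t) = circ (F t))"
  by (auto simp: Diff2_S1_def intro: C2_lift_lift)

lemma auto_compose_fg: "f \<in> auto (free_group n) \<Longrightarrow> g \<in> auto (free_group n) \<Longrightarrow>
  compose (carrier (free_group n)) f g \<in> auto (free_group n)"
proof -
  let ?W = "carrier (free_group n)"
  assume f: "f \<in> auto (free_group n)" and g: "g \<in> auto (free_group n)"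
  have fh: "f \<in> hom (free_group n) (free_group n)" and gh: "g \<in> hom (free_group n) (free_group n)"
    using f g by (auto simp: auto_def)
  have "compose ?W f g \<in> Bij ?W" using f g by (auto simp: auto_def intro: compose_Bij)
  moreover have "compose ?W f g \<in> hom (free_group n) (free_group n)"
    using fh gh mult_closed[of _ n]
    unfolding hom_def compose_def by (auto simp: mult_fg Pi_iff)
  ultimately show ?thesis by (simp add: auto_def)
qed

lemma fixed_b:
  fixes b :: bool
  assumes hom: "\<phi> \<in> hom (Aut_free n) Diff2_S1"
    and ijk: "i \<in> {1..n}" "j \<in> {1..n}" "k \<in> {1..n}" "i \<noteq> j" "i \<noteq> k" "k \<noteq> j"
  shows "has_fixed_point_S1 (\<phi> (subst_hom n (sig b i j)))"
proof (rule ccontr)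
  let ?W = "carrier (free_group n)"
  define x where "x = subst_hom n (sig b i k)"
  define y where "y = subst_hom n (sig b k j)"
  define z where "z = subst_hom n (sig b i j)"
  assume nf: "\<not> has_fixed_point_S1 (\<phi> (subst_hom n (sig b i j)))"
  have xa: "x \<in> carrier (Aut_free n)" and ya: "y \<in> carrier (Aut_free n)" and za: "z \<in> carrier (Aut_free n)"
    unfolding carrier_Aut x_def y_def z_def using ijk by (auto intro: sig_auto)
  have yza: "y \<otimes>\<^bsub>Aut_free n\<^esub> z \<in> carrier (Aut_free n)"
    using ya za by (simp add: carrier_Aut mult_Aut auto_compose_fg)
  have rels: "compose ?W y x = compose ?W x (compose ?W y z)" "compose ?W z y = compose ?W y z"
    using relations[OF ijk, of b] by (simp_all add: x_def y_def z_def)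
  have e1: "y \<otimes>\<^bsub>Aut_free n\<^esub> x = x \<otimes>\<^bsub>Aut_free n\<^esub> (y \<otimes>\<^bsub>Aut_free n\<^esub> z)"
    using xa ya za yza rels(1) by (simp add: carrier_Aut mult_Aut)
  have e2: "z \<otimes>\<^bsub>Aut_free n\<^esub> y = y \<otimes>\<^bsub>Aut_free n\<^esub> z"
    using ya za rels(2) by (simp add: carrier_Aut mult_Aut)
  have hm: "\<phi> (u \<otimes>\<^bsub>Aut_free n\<^esub> v) = \<phi> u \<circ> \<phi> v" if "u \<in> carrier (Aut_free n)" "v \<in> carrier (Aut_free n)" for u v
    using hom that unfolding hom_def by (simp add: mult_D)
  have hc: "\<phi> u \<in> carrier Diff2_S1" if "u \<in> carrier (Aut_free n)" for u
    using hom that unfolding hom_def by auto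
  have f1: "\<phi> y \<circ> \<phi> x = \<phi> x \<circ> (\<phi> y \<circ> \<phi> z)"
    using e1 hm[OF ya xa] hm[OF xa yza] hm[OF ya za] by simp
  have f2: "\<phi> z \<circ> \<phi> y = \<phi> y \<circ> \<phi> z"
    using e2 hm[OF za ya] hm[OF ya za] by simp
  obtain X where lX: "lift X" and X: "\<And>t. \<phi> x (circ t) = circ (X t)" using carrier_D[OF hc[OF xa]] by blast
  obtain Y where lY: "lift Y" and Y: "\<And>t. \<phi> y (circ t) = circ (Y t)" using carrier_D[OF hc[OF ya]] by blast
  obtain Z where lZ: "lift Z" and Z: "\<And>t. \<phi> z (circ t) = circ (Z t)" using carrier_D[OF hc[OF za]] by blast
  have r1: "Y (X t) - X (Y (Z t)) \<in> \<int>" for t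
  proof -
    have "circ (Y (X t)) = (\<phi> y \<circ> \<phi> x) (circ t)" by (simp add: X Y)
    also have "\<dots> = (\<phi> x \<circ> (\<phi> y \<circ> \<phi> z)) (circ t)" by (simp add: f1)
    also have "\<dots> = circ (X (Y (Z t)))" by (simp add: X Y Z)
    finally show ?thesis by (simp add: circ_eq)
  qed
  have r2: "Z (Y t) - Y (Z t) \<in> \<int>" for t
  proof -
    have "circ (Z (Y t)) = (\<phi> z \<circ> \<phi> y) (circ t)" by (simp add: Z Y)
    also have "\<dots> = (\<phi> y \<circ> \<phi> z) (circ t)" by (simp add: f2)
    also have "\<dots> = circ (Y (Z t))" by (simp add: Y Z)
    finally show ?thesis by (simp add: circ_eq)
  qed
  have nz: "Z t - t \<notin> \<int>" for t
  proof
    assume "Z t - t \<in> \<int>"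
    then have "\<phi> z (circ t) = circ t" by (simp add: Z circ_eq)
    then show False using nf circ_S1[of t] by (auto simp: has_fixed_point_S1_def z_def)
  qed
  show False by (rule normalize_contra[OF lX lY lZ r1 r2 nz])
qed

theorem lemma4p2:
  fixes n :: nat and \<phi> :: "(letter list \<Rightarrow> letter list) \<Rightarrow> (complex \<Rightarrow> complex)"
  assumes "n > 4"
    and "\<phi> \<in> hom (Aut_free n) Diff2_S1"
    and "i \<in> {1..n}" and "j \<in> {1..n}" and "i \<noteq> j"
  shows "has_fixed_point_S1 (\<phi> (A_aut n i j)) \<and> has_fixed_point_S1 (\<phi> (B_aut n i j))"
proof -
  define k :: nat where "k = (if 1 \<noteq> i \<and> 1 \<noteq> j then 1 else if 2 \<noteq> i \<and> 2 \<noteq> j then 2 else 3)"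
  have k: "k \<in> {1..n}" "i \<noteq> k" "k \<noteq> j" using assms(1,5) by (auto simp: k_def)
  show ?thesis
    using fixed_b[OF assms(2) assms(3) assms(4) k(1) assms(5) k(2) k(3), of True]
          fixed_b[OF assms(2) assms(3) assms(4) k(1) assms(5) k(2) k(3), of False]
    by (simp add: A_sig B_sig)
qed

end
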